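(* Let $U\ge 1$ users be indexed by $n\in\{1,\dots,U\}$. Fix a duty cycle $d\in(0,1)$, a maximum transmit power $P_t>0$, a noise variance $\sigma^2>0$, and for each user $n$ a harvested energy per unit time $E_n>0$, a channel gain $g_n>0$ and a time on air $T_{a,n}>0$ (the spreading factors, hence the $T_{a,n}$, are fixed). Let $\rho_{m,n}\in[0,1]$ be correlation factors with $\rho_{n,n}=1$. Suppose the packet collision time between users $n$ and $m$ is the worst-case one, $col_{n,m}=\min(T_{a,n},T_{a,m})$, independent of the energy-harvesting times. For powers $p=(p_n)$ define $$\gamma_n=\frac{p_n g_n}{\sum_{m\neq n}\frac{col_{n,m}}{T_{a,m}}\rho_{m,n}\,p_m g_m+\sigma^2},$$ and consider the problem of maximizing $\min_{n}\log(1+\gamma_n)$ over energy-harvesting times $\tau_{e,n}$ and powers $p_n$ subject to $0\le p_n\le P_t$, $0\le p_n\le \tau_{e,n}E_n/T_{a,n}$, and $0\le \tau_{e,n}\le \frac{1-d}{d}T_{a,n}$ for all $n$. Then the optimal energy-harvesting time of each user $n$ is $$\tau_{e,n}=\delta^{(2)}_{n,max}:=\min\!\left(\frac{P_t}{E_n},\frac{1-d}{d}\right)T_{a,n},$$ which is proportional to $T_{a,n}$; i.e. choosing $\tau_{e,n}=\delta^{(2)}_{n,max}$ for all $n$ (with a suitable power allocation) attains the maximum of the problem. Moreover, with this choice the available power after harvesting, $P_{h,n}=\tau_{e,n}E_n/T_{a,n}=\min\!\left(P_t,\frac{1-d}{d}E_n\right)$, is independent of $T_{a,n}$, so the choice of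 spreading factor has no effect on the energy-harvesting constraint of each user.
   Context: Model: LoRa users transmit uplink to a gateway under a "harvest-then-transmit" protocol. User $n$ first harvests energy for a time $\tau_{e,n}$, obtaining energy $\tau_{e,n}E_n$, then transmits a packet of duration (time on air) $T_{a,n}$; the available power is $P_{h,n}=\tau_{e,n}E_n/T_{a,n}$. The duty-cycle restriction limits the harvesting time to at most the off time $\frac{1-d}{d}T_{a,n}$. The transmit power $p_n$ is limited both by the maximum transmit power $P_t$ and by the available harvested power. The rate of user $n$ is $\log(1+\gamma_n)$ with $\gamma_n$ the SINR defined in the claim. *)

theory Defs
  imports Complex_Main
begin

definition col :: "(nat \<Rightarrow> real) \<Rightarrow> nat \<Rightarrow> nat \<Rightarrow> real" where
  "col Ta n m = min (Ta n) (Ta m)"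

definition sinr :: "nat \<Rightarrow> (nat \<Rightarrow> real) \<Rightarrow> (nat \<Rightarrow> nat \<Rightarrow> real) \<Rightarrow> (nat \<Rightarrow> real)
    \<Rightarrow> real \<Rightarrow> (nat \<Rightarrow> real) \<Rightarrow> nat \<Rightarrow> real" where
  "sinr U Ta rho g sigma2 p n =
     p n * g n /
     ((\<Sum>m\<in>{1..U} - {n}. col Ta n m / Ta m * rho m n * p m * g m) + sigma2)"

definition min_rate :: "nat \<Rightarrow> (nat \<Rightarrow> real) \<Rightarrow> (nat \<Rightarrow> nat \<Rightarrow> real) \<Rightarrow> (nat \<Rightarrow> real)
    \<Rightarrow> real \<Rightarrow> (nat \<Rightarrow> real) \<Rightarrow> real" where
  "min_rate U Ta rho g sigma2 p = Min ((\<lambda>n. ln (1 + sinr U Ta rho g sigma2 p n)) ` {1..U})"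

definition feasible :: "nat \<Rightarrow> real \<Rightarrow> real \<Rightarrow> (nat \<Rightarrow> real) \<Rightarrow> (nat \<Rightarrow> real)
    \<Rightarrow> (nat \<Rightarrow> real) \<Rightarrow> (nat \<Rightarrow> real) \<Rightarrow> bool" where
  "feasible U d Pt E Ta tau p \<longleftrightarrow>
     (\<forall>n\<in>{1..U}. 0 \<le> p n \<and> p n \<le> Pt \<and> p n \<le> tau n * E n / Ta n
        \<and> 0 \<le> tau n \<and> tau n \<le> (1 - d) / d * Ta n)"

definition delta2_max :: "real \<Rightarrow> real \<Rightarrow> (nat \<Rightarrow> real) \<Rightarrow> (nat \<Rightarrow> real) \<Rightarrow> nat \<Rightarrow> real" where
  "delta2_max d Pt E Ta n = min (Pt / E n) ((1 - d) / d) * Ta n"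

end

theory Submission
  imports Defs "HOL-Analysis.Analysis"
begin

lemma cont_Min_fam:
  fixes f :: "'i \<Rightarrow> 'a::topological_space \<Rightarrow> real"
  assumes "finite A" "A \<noteq> {}" "\<And>i. i \<in> A \<Longrightarrow> continuous_on S (f i)"
  shows "continuous_on S (\<lambda>x. Min ((\<lambda>i. f i x) ` A))"
  using assms
proof (induction A rule: finite_ne_induct)
  case (singleton x)
  then show ?case by simp
next
  case (insert a F)
  have "continuous_on S (\<lambda>x. min (f a x) (Min ((\<lambda>i. f i x) ` F)))"
    using insert by (intro continuous_on_min) auto
  then show ?case using insert by (simp add: Min_insert)
qed

theorem corollary1:
  fixes U :: nat and d Pt sigma2 :: real
    and E g Ta :: "nat \<Rightarrow> real" and rho :: "nat \<Rightarrow> nat \<Rightarrow> real"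
  assumes "U \<ge> 1"
    and "0 < d" "d < 1" "0 < Pt" "0 < sigma2"
    and "\<forall>n\<in>{1..U}. 0 < E n \<and> 0 < g n \<and> 0 < Ta n"
    and "\<forall>m\<in>{1..U}. \<forall>n\<in>{1..U}. 0 \<le> rho m n \<and> rho m n \<le> 1"
    and "\<forall>n\<in>{1..U}. rho n n = 1"
  shows "(\<exists>p. feasible U d Pt E Ta (delta2_max d Pt E Ta) p \<and>
            (\<forall>tau' p'. feasible U d Pt E Ta tau' p' \<longrightarrow>
               min_rate U Ta rho g sigma2 p' \<le> min_rate U Ta rho g sigma2 p))
       \<and> (\<forall>n\<in>{1..U}. delta2_max d Pt E Ta n * E n / Ta n = min Pt ((1 - d) / d * E n))"
proof -
  define Pm where "Pm n = min Pt ((1 - d) / d * E n)" for n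
  have dpos: "(1 - d) / d > 0" using assms by simp
  have part2: "\<forall>n\<in>{1..U}. delta2_max d Pt E Ta n * E n / Ta n = Pm n"
  proof
    fix n assume n: "n \<in> {1..U}"
    have E: "E n > 0" "Ta n > 0" using assms(6) n by auto
    have "min (Pt / E n) ((1 - d) / d) * E n = min Pt ((1 - d) / d * E n)"
    proof -
      have "min (Pt / E n) ((1 - d) / d) * E n = min (Pt / E n * E n) ((1 - d) / d * E n)"
        using E(1) by (simp only: min_mult_distrib_right) simp
      then show ?thesis using E by simp
    qed
    then show "delta2_max d Pt E Ta n * E n / Ta n = Pm n"
      using E by (simp add: delta2_max_def Pm_def)
  qed
  have Pm_pos: "Pm n > 0" if "n \<in> {1..U}" for n
  proof -
    have "E n > 0" using assms(6) that by auto
    hence "(1 - d) / d * E n > 0" using dpos by (rule mult_pos_pos[rotated])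
    thus ?thesis using assms(4) by (simp add: Pm_def)
  qed
  define K where "K = PiE UNIV (\<lambda>n. if n \<in> {1..U} then {0..Pm n} else {0::real})"
  have "compactin (product_topology (\<lambda>_. euclidean) UNIV) K"
    unfolding K_def by (subst compactin_PiE) auto
  hence cK: "compact K" by (simp add: euclidean_product_topology)
  have K_mem: "p \<in> K \<longleftrightarrow> (\<forall>n. (n \<in> {1..U} \<longrightarrow> 0 \<le> p n \<and> p n \<le> Pm n) \<and> (n \<notin> {1..U} \<longrightarrow> p n = 0))" for p
    unfolding K_def by (auto simp: PiE_iff)
  have K_ne: "K \<noteq> {}" using K_mem[of "\<lambda>_. 0"] Pm_pos by (auto intro: less_imp_le)
  have den_pos: "(\<Sum>m\<in>{1..U} - {n}. col Ta n m / Ta m * rho m n * p m * g m) + sigma2 > 0"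
    if "n \<in> {1..U}" "\<forall>m\<in>{1..U}. 0 \<le> p m" for p n
  proof -
    have "(\<Sum>m\<in>{1..U} - {n}. col Ta n m / Ta m * rho m n * p m * g m) \<ge> 0"
    proof (rule sum_nonneg)
      fix m assume m: "m \<in> {1..U} - {n}"
      have "Ta n > 0" "Ta m > 0" using assms(6) m that(1) by auto
      hence "col Ta n m \<ge> 0" by (simp add: col_def)
      moreover have "Ta m > 0" "g m > 0" "rho m n \<ge> 0" "p m \<ge> 0"
        using assms(6,7) m that by auto
      ultimately show "0 \<le> col Ta n m / Ta m * rho m n * p m * g m" by simp
    qed
    then show ?thesis using assms(5) by linarith
  qed
  have sinr_nn: "sinr U Ta rho g sigma2 p n \<ge> 0"
    if "n \<in> {1..U}" "\<forall>m\<in>{1..U}. 0 \<le> p m" for p n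
  proof -
    have "p n \<ge> 0" "g n > 0" using that assms(6) by auto
    hence "p n * g n \<ge> 0" by simp
    thus ?thesis using den_pos[OF that] unfolding sinr_def
      by (intro divide_nonneg_pos) auto
  qed
  have cont: "continuous_on K (min_rate U Ta rho g sigma2)"
  proof -
    have "continuous_on K (\<lambda>p. Min ((\<lambda>n. ln (1 + sinr U Ta rho g sigma2 p n)) ` {1..U}))"
    proof (rule cont_Min_fam)
      show "{1..U} \<noteq> {}" using assms(1) by simp
      fix n assume n: "n \<in> {1..U}"
      have pc: "continuous_on K (\<lambda>p. p m)" for m
        by (rule continuous_on_subset[OF continuous_on_product_coordinates]) auto
      have c1: "continuous_on K (\<lambda>p. sinr U Ta rho g sigma2 p n)"
        unfolding sinr_def
        apply (intro continuous_intros pc)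
        using den_pos[OF n] K_mem by (auto simp: less_imp_neq[symmetric] dest: less_imp_neq)
      show "continuous_on K (\<lambda>p. ln (1 + sinr U Ta rho g sigma2 p n))"
        apply (intro continuous_intros c1)
        using sinr_nn[OF n] K_mem
        by (metis add_pos_nonneg less_numeral_extra(1) less_irrefl)
    qed simp
    then show ?thesis unfolding min_rate_def by simp
  qed
  obtain p where pK: "p \<in> K" and pmax: "\<forall>q\<in>K. min_rate U Ta rho g sigma2 q \<le> min_rate U Ta rho g sigma2 p"
    using continuous_attains_sup[OF cK K_ne cont] by blast
  have feas: "feasible U d Pt E Ta (delta2_max d Pt E Ta) p"
    unfolding feasible_def
  proof
    fix n assume n: "n \<in> {1..U}"
    have E: "E n > 0" "Ta n > 0" using assms(6) n by auto
    have "0 \<le> min (Pt / E n) ((1 - d) / d)" using E assms(4) dpos by simp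
    hence t0: "0 \<le> delta2_max d Pt E Ta n" using E by (simp add: delta2_max_def)
    have t1: "delta2_max d Pt E Ta n \<le> (1 - d) / d * Ta n"
      unfolding delta2_max_def using E(2) by (intro mult_right_mono) auto
    show "0 \<le> p n \<and> p n \<le> Pt \<and> p n \<le> delta2_max d Pt E Ta n * E n / Ta n \<and>
        0 \<le> delta2_max d Pt E Ta n \<and> delta2_max d Pt E Ta n \<le> (1 - d) / d * Ta n"
      using pK K_mem n part2 t0 t1 by (auto simp: Pm_def)
  qed
  have opt: "min_rate U Ta rho g sigma2 p' \<le> min_rate U Ta rho g sigma2 p"
    if f: "feasible U d Pt E Ta tau' p'" for tau' p'
  proof -
    define q where "q n = (if n \<in> {1..U} then p' n else 0)" for n
    have "q \<in> K" unfolding K_mem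
    proof (intro allI conjI impI)
      fix n assume n: "n \<in> {1..U}"
      have E: "E n > 0" "Ta n > 0" using assms(6) n by auto
      have fn: "0 \<le> p' n" "p' n \<le> Pt" "p' n \<le> tau' n * E n / Ta n" "tau' n \<le> (1 - d) / d * Ta n"
        using f n unfolding feasible_def by auto
      have "tau' n * E n / Ta n \<le> (1 - d) / d * Ta n * E n / Ta n"
        using fn(4) E by (intro divide_right_mono mult_right_mono) auto
      also have "\<dots> = (1 - d) / d * E n" using E by simp
      finally show "0 \<le> q n" "q n \<le> Pm n" using fn n by (auto simp: q_def Pm_def)
    qed (auto simp: q_def)
    hence "min_rate U Ta rho g sigma2 q \<le> min_rate U Ta rho g sigma2 p" using pmax by blast
    moreover have "min_rate U Ta rho g sigma2 q = min_rate U Ta rho g sigma2 p'"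
      unfolding min_rate_def sinr_def
      by (intro arg_cong[where f=Min] image_cong refl arg_cong[where f=ln]
          arg_cong2[where f="(+)"] arg_cong2[where f="(/)"] sum.cong) (auto simp: q_def)
    ultimately show ?thesis by simp
  qed
  show ?thesis using feas opt part2 unfolding Pm_def by blast
qed

end
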